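(* Consider the regular partially labeled binary broadcasting tree $\text{Tree}_{k=2}(\theta,d,\delta)$ (see context), and let $\mu^{+}_{\ell_{T_{\leq t}(\rho)}}$ and $\mu^{-}_{\ell_{T_{\leq t}(\rho)}}$ be the distributions of the revealed labels $\ell_{T_{\leq t}(\rho)}$ conditionally on $\ell(\rho)=+$ and $\ell(\rho)=-$ respectively. Assume $\delta d>1$, $(1-\delta)\theta^2 d<1$, and $2\delta d\log\big(1+\frac{4\theta^2}{1-\theta^2}\big)<[1-(1-\delta)\theta^2 d]^2$. Then for any $t>0$, $$d_{\rm TV}^2\big(\mu^{+}_{\ell_{T_{\leq t}(\rho)}},\mu^{-}_{\ell_{T_{\leq t}(\rho)}}\big)\leq \frac{2\delta d\log\big(1+\frac{4\theta^2}{1-\theta^2}\big)}{1-(1-\delta)\theta^2 d},$$ and consequently $$\inf_\Phi\sup_{\ell(\rho)\in\{+,-\}}\mathbb{P}\big(\Phi(\ell_{T_{\leq t}(\rho)})\neq\ell(\rho)\big)\geq \frac12-C\Big\{\frac{\delta d\log\big(1+\frac{4\theta^2}{1-\theta^2}\big)}{1-(1-\delta)\theta^2 d}\Big\}^{1/2},$$ where the infimum is over all estimators $\Phi$ mapping the revealed labels of the depth-$t$ tree to $\{+,-\}$ and $C>0$ is a universal constant.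
   Context: $\text{Tree}_{k=2}(\theta,d,\delta)$ (regular version): a rooted tree in which every vertex has $d$ children, exactly $\delta d$ of which have revealed labels and $(1-\delta)d$ unlabeled. The root label $\ell(\rho)\in\{+,-\}$ is unrevealed; each child copies its parent's label with probability $\frac{1+\theta}{2}$ and takes the opposite label with probability $\frac{1-\theta}{2}$, independently, $0<\theta<1$. $\ell_{T_{\leq t}(\rho)}$ is the collection of revealed labels at depth $\leq t$. *)

theory Defs
  imports "HOL-Probability.Probability"
begin

text \<open>Vertices of the d-regular tree up to depth t: root is [], the i-th child
 of v is v @ [i] with i < d.  A non-root vertex v is revealed iff its child
 index last v is < m (m = delta d revealed children per vertex).
 Labels are booleans (True = +).\<close>

definition tree_vertices :: "nat \<Rightarrow> nat \<Rightarrow> nat list set" where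
  "tree_vertices d t = {v. length v \<le> t \<and> (\<forall>i\<in>set v. i < d)}"

definition revealed_vertices :: "nat \<Rightarrow> nat \<Rightarrow> nat \<Rightarrow> nat list set" where
  "revealed_vertices d m t = {v \<in> tree_vertices d t. v \<noteq> [] \<and> last v < m}"

text \<open>Independent edge flips: the edge into non-root vertex w flips the label
 (f w = True) with probability (1 - theta)/2.\<close>
definition edge_flips :: "real \<Rightarrow> nat \<Rightarrow> nat \<Rightarrow> (nat list \<Rightarrow> bool) pmf" where
  "edge_flips \<theta> d t = Pi_pmf (tree_vertices d t - {[]}) False
      (\<lambda>_. bernoulli_pmf ((1 - \<theta>) / 2))"

definition vertex_label :: "bool \<Rightarrow> (nat list \<Rightarrow> bool) \<Rightarrow> nat list \<Rightarrow> bool" where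
  "vertex_label s f v = (s \<noteq> odd (card {k \<in> {1..length v}. f (take k v)}))"

definition revealed_dist ::
  "real \<Rightarrow> nat \<Rightarrow> nat \<Rightarrow> nat \<Rightarrow> bool \<Rightarrow> (nat list \<Rightarrow> bool option) pmf" where
  "revealed_dist \<theta> d m t s = map_pmf
     (\<lambda>f v. if v \<in> revealed_vertices d m t then Some (vertex_label s f v) else None)
     (edge_flips \<theta> d t)"

definition tv_dist :: "'a pmf \<Rightarrow> 'a pmf \<Rightarrow> real" where
  "tv_dist p q = (SUP A. \<bar>measure_pmf.prob p A - measure_pmf.prob q A\<bar>)"

end

theory Submission
  imports Defs
begin


definition bc :: "'a pmf \<Rightarrow> 'a pmf \<Rightarrow> real" where
  "bc p q = (\<Sum>x\<in>set_pmf p. sqrt (pmf p x * pmf q x))"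

lemma bc_eq:
  assumes "finite S" "set_pmf p \<subseteq> S"
  shows "bc p q = (\<Sum>x\<in>S. sqrt (pmf p x * pmf q x))"
  unfolding bc_def
  by (rule sum.mono_neutral_left) (use assms in \<open>auto simp: set_pmf_eq\<close>)

lemma bc_nonneg: "bc p q \<ge> 0"
  unfolding bc_def by (intro sum_nonneg) auto

lemma sum_sqrt_le:
  fixes a b :: "'a \<Rightarrow> real"
  assumes "\<And>i. i \<in> A \<Longrightarrow> a i \<ge> 0" "\<And>i. i \<in> A \<Longrightarrow> b i \<ge> 0"
  shows "(\<Sum>i\<in>A. sqrt (a i * b i)) \<le> sqrt (sum a A * sum b A)"
proof -
  have "(\<Sum>i\<in>A. sqrt (a i) * sqrt (b i))\<^sup>2 \<le> (\<Sum>i\<in>A. (sqrt (a i))\<^sup>2) * (\<Sum>i\<in>A. (sqrt (b i))\<^sup>2)"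
    by (rule Cauchy_Schwarz_ineq_sum)
  also have "\<dots> = sum a A * sum b A"
    using assms by (simp)
  finally have "(\<Sum>i\<in>A. sqrt (a i * b i))\<^sup>2 \<le> sum a A * sum b A"
    by (simp add: real_sqrt_mult)
  thus ?thesis by (rule real_le_rsqrt)
qed

lemma bc_map:
  assumes fin: "finite (set_pmf p)"
  shows "bc p q \<le> bc (map_pmf g p) (map_pmf g q)"
proof -
  let ?S = "set_pmf p"
  have "bc p q = (\<Sum>x\<in>?S. sqrt (pmf p x * pmf q x))" by (simp add: bc_def)
  also have "\<dots> = (\<Sum>y\<in>g ` ?S. \<Sum>x\<in>{x\<in>?S. g x = y}. sqrt (pmf p x * pmf q x))"
    by (rule sum.image_gen[OF fin])
  also have "\<dots> \<le> (\<Sum>y\<in>g ` ?S. sqrt (pmf (map_pmf g p) y * pmf (map_pmf g q) y))"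
  proof (rule sum_mono)
    fix y assume y: "y \<in> g ` ?S"
    have fy: "finite {x\<in>?S. g x = y}" using fin by auto
    have 1: "pmf (map_pmf g p) y = (\<Sum>x\<in>{x\<in>?S. g x = y}. pmf p x)"
    proof -
      have "pmf (map_pmf g p) y = measure p (g -` {y})" by (rule pmf_map)
      also have "\<dots> = measure p {x\<in>?S. g x = y}"
        by (intro measure_prob_cong_0) (auto simp: set_pmf_eq)
      also have "\<dots> = (\<Sum>x\<in>{x\<in>?S. g x = y}. pmf p x)"
        using fy by (rule measure_measure_pmf_finite)
      finally show ?thesis .
    qed
    have 2: "pmf (map_pmf g q) y \<ge> (\<Sum>x\<in>{x\<in>?S. g x = y}. pmf q x)"
    proof -
      have "(\<Sum>x\<in>{x\<in>?S. g x = y}. pmf q x) = measure q {x\<in>?S. g x = y}"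
        using fy by (rule measure_measure_pmf_finite[symmetric])
      also have "\<dots> \<le> measure q (g -` {y})"
        by (intro measure_pmf.finite_measure_mono) auto
      also have "\<dots> = pmf (map_pmf g q) y" by (rule pmf_map[symmetric])
      finally show ?thesis .
    qed
    have "(\<Sum>x\<in>{x\<in>?S. g x = y}. sqrt (pmf p x * pmf q x))
          \<le> sqrt ((\<Sum>x\<in>{x\<in>?S. g x = y}. pmf p x) * (\<Sum>x\<in>{x\<in>?S. g x = y}. pmf q x))"
      by (rule sum_sqrt_le) auto
    also have "\<dots> \<le> sqrt (pmf (map_pmf g p) y * pmf (map_pmf g q) y)"
      unfolding 1 by (intro real_sqrt_le_mono mult_left_mono 2 sum_nonneg) auto
    finally show "(\<Sum>x\<in>{x\<in>?S. g x = y}. sqrt (pmf p x * pmf q x))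
          \<le> sqrt (pmf (map_pmf g p) y * pmf (map_pmf g q) y)" .
  qed
  also have "\<dots> = bc (map_pmf g p) (map_pmf g q)"
    by (simp add: bc_def)
  finally show ?thesis .
qed

lemma sqrt_prod: "finite A \<Longrightarrow> sqrt (\<Prod>i\<in>A. f i) = (\<Prod>i\<in>A. sqrt (f i))"
  by (induct rule: finite_induct) (auto simp: real_sqrt_mult)

lemma bc_Pi:
  assumes A: "finite A" and fin: "\<And>i. i \<in> A \<Longrightarrow> finite (set_pmf (p i))"
  shows "bc (Pi_pmf A dflt p) (Pi_pmf A dflt q) = (\<Prod>i\<in>A. bc (p i) (q i))"
proof -
  let ?B = "\<lambda>i. set_pmf (p i)"
  let ?e = "\<lambda>h x. if x \<in> A then h x else dflt"
  have "bc (Pi_pmf A dflt p) (Pi_pmf A dflt q) =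
        (\<Sum>f\<in>PiE_dflt A dflt (set_pmf \<circ> p). sqrt (pmf (Pi_pmf A dflt p) f * pmf (Pi_pmf A dflt q) f))"
    by (simp add: bc_def set_Pi_pmf[OF A])
  also have "\<dots> = (\<Sum>f\<in>PiE_dflt A dflt (set_pmf \<circ> p). \<Prod>i\<in>A. sqrt (pmf (p i) (f i) * pmf (q i) (f i)))"
    by (intro sum.cong refl)
       (auto simp: pmf_Pi[OF A] PiE_dflt_def prod.distrib[symmetric] sqrt_prod[OF A])
  also have "PiE_dflt A dflt (set_pmf \<circ> p) = ?e ` PiE A ?B"
    by (simp add: dflt_image_PiE[symmetric] o_def)
  also have "(\<Sum>f\<in>?e ` PiE A ?B. \<Prod>i\<in>A. sqrt (pmf (p i) (f i) * pmf (q i) (f i)))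
           = (\<Sum>h\<in>PiE A ?B. \<Prod>i\<in>A. sqrt (pmf (p i) (h i) * pmf (q i) (h i)))"
  proof (subst sum.reindex)
    show "inj_on ?e (PiE A ?B)"
      by (auto simp: inj_on_def fun_eq_iff PiE_def extensional_def) metis
  qed (auto intro!: sum.cong prod.cong)
  also have "\<dots> = (\<Prod>i\<in>A. \<Sum>y\<in>?B i. sqrt (pmf (p i) y * pmf (q i) y))"
    by (rule prod_sum_PiE[symmetric]) (use A fin in auto)
  also have "\<dots> = (\<Prod>i\<in>A. bc (p i) (q i))" by (simp add: bc_def)
  finally show ?thesis .
qed



lemma sqrt_concave2:
  fixes a b p r :: real
  assumes "a \<ge> 0" "b \<ge> 0" "a + b = 1" "p \<ge> 0" "r \<ge> 0"
  shows "a * sqrt p + b * sqrt r \<le> sqrt (a * p + b * r)"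
proof (rule real_le_rsqrt)
  have "a * p + b * r - (a * sqrt p + b * sqrt r)\<^sup>2 = a * b * (sqrt p - sqrt r)\<^sup>2"
  proof -
    have e: "a * p + b * r = (a + b) * (a * (sqrt p)\<^sup>2 + b * (sqrt r)\<^sup>2)"
      using assms by simp
    show ?thesis unfolding e by (simp add: power2_eq_square algebra_simps)
  qed
  moreover have "a * b * (sqrt p - sqrt r)\<^sup>2 \<ge> 0" using assms by simp
  ultimately show "(a * sqrt p + b * sqrt r)\<^sup>2 \<le> a * p + b * r" by linarith
qed
lemma mix_point:
  fixes a b p r :: real
  assumes ab: "a \<ge> 0" "b \<ge> 0" "a + b = 1" and pr: "p \<ge> 0" "r \<ge> 0"
  defines "x \<equiv> a * p + b * r" and "y \<equiv> b * p + a * r"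
  shows "(sqrt x - sqrt y)\<^sup>2 \<le> (a - b)\<^sup>2 * (sqrt p - sqrt r)\<^sup>2"
proof (cases "sqrt p + sqrt r = 0")
  case True
  hence "sqrt p = 0" "sqrt r = 0" using real_sqrt_ge_zero[OF pr(1)] real_sqrt_ge_zero[OF pr(2)] by linarith+
  hence "p = 0" "r = 0" by simp_all
  thus ?thesis by (simp add: x_def y_def)
next
  case False
  have xy: "x \<ge> 0" "y \<ge> 0" using ab pr by (simp_all add: x_def y_def)
  have W: "sqrt p + sqrt r > 0" using False real_sqrt_ge_zero[OF pr(1)] real_sqrt_ge_zero[OF pr(2)] by linarith
  have 1: "a * sqrt p + b * sqrt r \<le> sqrt x"
    unfolding x_def by (rule sqrt_concave2) (use ab pr in auto)
  have 2: "b * sqrt p + a * sqrt r \<le> sqrt y"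
    unfolding y_def by (rule sqrt_concave2) (use ab pr in auto)
  have U: "sqrt p + sqrt r \<le> sqrt x + sqrt y"
  proof -
    have "sqrt p + sqrt r = (a + b) * sqrt p + (a + b) * sqrt r" using ab by simp
    also have "\<dots> = (a * sqrt p + b * sqrt r) + (b * sqrt p + a * sqrt r)" by (simp add: algebra_simps)
    finally show ?thesis using 1 2 by linarith
  qed
  have eq: "(sqrt x - sqrt y)\<^sup>2 * (sqrt x + sqrt y)\<^sup>2 = ((a - b)\<^sup>2 * (sqrt p - sqrt r)\<^sup>2) * (sqrt p + sqrt r)\<^sup>2"
  proof -
    have d1: "(sqrt x - sqrt y) * (sqrt x + sqrt y) = x - y"
      using xy by (simp add: algebra_simps real_sqrt_mult_self)
    have "(sqrt x - sqrt y)\<^sup>2 * (sqrt x + sqrt y)\<^sup>2 = (x - y)\<^sup>2"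
      by (simp flip: d1 power_mult_distrib)
    also have "x - y = (a - b) * (p - r)" by (simp add: x_def y_def algebra_simps)
    also have d2: "p - r = (sqrt p - sqrt r) * (sqrt p + sqrt r)"
      using pr by (simp add: algebra_simps real_sqrt_mult_self)
    also have "((a - b) * ((sqrt p - sqrt r) * (sqrt p + sqrt r)))\<^sup>2 = ((a - b)\<^sup>2 * (sqrt p - sqrt r)\<^sup>2) * (sqrt p + sqrt r)\<^sup>2"
      by (simp add: power_mult_distrib)
    finally show ?thesis .
  qed
  have Wsq: "(sqrt p + sqrt r)\<^sup>2 \<le> (sqrt x + sqrt y)\<^sup>2"
    using U W by (intro power_mono) auto
  have "(sqrt x - sqrt y)\<^sup>2 * (sqrt p + sqrt r)\<^sup>2 \<le> (sqrt x - sqrt y)\<^sup>2 * (sqrt x + sqrt y)\<^sup>2"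
    by (intro mult_left_mono Wsq) auto
  also note eq
  finally have "(sqrt x - sqrt y)\<^sup>2 * (sqrt p + sqrt r)\<^sup>2 \<le> ((a - b)\<^sup>2 * (sqrt p - sqrt r)\<^sup>2) * (sqrt p + sqrt r)\<^sup>2" .
  moreover have "(sqrt p + sqrt r)\<^sup>2 > 0" using W by simp
  ultimately show ?thesis by (simp add: mult_le_cancel_right)
qed

lemma bc_mix:
  assumes f1: "finite (set_pmf P1)" and f0: "finite (set_pmf P0)"
    and ab: "a \<ge> 0" "b \<ge> 0" "a + b = 1"
    and K1: "\<And>x. pmf K1 x = a * pmf P1 x + b * pmf P0 x"
    and K0: "\<And>x. pmf K0 x = b * pmf P1 x + a * pmf P0 x"
  shows "1 - bc K1 K0 \<le> (a - b)\<^sup>2 * (1 - bc P1 P0)"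
proof -
  define S where "S = set_pmf P1 \<union> set_pmf P0"
  have S: "finite S" using f1 f0 by (simp add: S_def)
  have sK1: "set_pmf K1 \<subseteq> S" by (auto simp: S_def set_pmf_eq K1)
  have sK0: "set_pmf K0 \<subseteq> S" by (auto simp: S_def set_pmf_eq K0)
  have sums: "sum (pmf K1) S = 1" "sum (pmf K0) S = 1" "sum (pmf P1) S = 1" "sum (pmf P0) S = 1"
    using S sK1 sK0 by (auto intro!: sum_pmf_eq_1 simp: S_def)
  have "\<And>x. (sqrt (pmf K1 x) - sqrt (pmf K0 x))\<^sup>2 \<le> (a - b)\<^sup>2 * (sqrt (pmf P1 x) - sqrt (pmf P0 x))\<^sup>2"
    unfolding K1 K0 by (rule mix_point) (use ab in auto)
  hence "(\<Sum>x\<in>S. (sqrt (pmf K1 x) - sqrt (pmf K0 x))\<^sup>2) \<le> (\<Sum>x\<in>S. (a - b)\<^sup>2 * (sqrt (pmf P1 x) - sqrt (pmf P0 x))\<^sup>2)"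
    by (intro sum_mono)
  also have "\<dots> = (a - b)\<^sup>2 * (\<Sum>x\<in>S. (sqrt (pmf P1 x) - sqrt (pmf P0 x))\<^sup>2)"
    by (simp add: sum_distrib_left)
  finally have *: "(\<Sum>x\<in>S. (sqrt (pmf K1 x) - sqrt (pmf K0 x))\<^sup>2) \<le> (a - b)\<^sup>2 * (\<Sum>x\<in>S. (sqrt (pmf P1 x) - sqrt (pmf P0 x))\<^sup>2)" .
  have sq: "(\<Sum>x\<in>S. (sqrt (pmf P x) - sqrt (pmf Q x))\<^sup>2) = sum (pmf P) S + sum (pmf Q) S - 2 * (\<Sum>x\<in>S. sqrt (pmf P x * pmf Q x))"
    for P Q :: "'a pmf"
    by (simp add: power2_eq_square algebra_simps sum.distrib sum_subtractf sum_distrib_left real_sqrt_mult)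
  have "bc K1 K0 = (\<Sum>x\<in>S. sqrt (pmf K1 x * pmf K0 x))" by (rule bc_eq[OF S sK1])
  moreover have "bc P1 P0 = (\<Sum>x\<in>S. sqrt (pmf P1 x * pmf P0 x))" by (rule bc_eq[OF S]) (auto simp: S_def)
  ultimately show ?thesis using * unfolding sq sums by (simp add: algebra_simps)
qed

lemma tv_bc:
  assumes fp: "finite (set_pmf P)" and fq: "finite (set_pmf Q)"
  shows "\<bar>measure_pmf.prob P A - measure_pmf.prob Q A\<bar> \<le> sqrt (1 - (bc P Q)\<^sup>2)"
proof -
  define S where "S = set_pmf P \<union> set_pmf Q"
  have S: "finite S" using fp fq by (simp add: S_def)
  define e where "e x = (if x \<in> A then 1 else -1::real)" for x
  have PA: "measure_pmf.prob P A = sum (pmf P) (S \<inter> A)"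
  proof -
    have "measure_pmf.prob P A = measure_pmf.prob P (S \<inter> A)"
      by (intro measure_prob_cong_0) (auto simp: S_def set_pmf_eq)
    thus ?thesis using S by (simp add: measure_measure_pmf_finite)
  qed
  have QA: "measure_pmf.prob Q A = sum (pmf Q) (S \<inter> A)"
  proof -
    have "measure_pmf.prob Q A = measure_pmf.prob Q (S \<inter> A)"
      by (intro measure_prob_cong_0) (auto simp: S_def set_pmf_eq)
    thus ?thesis using S by (simp add: measure_measure_pmf_finite)
  qed
  have s1: "sum (pmf P) S = 1" "sum (pmf Q) S = 1"
    using S by (auto intro!: sum_pmf_eq_1 simp: S_def)
  have split: "sum f S = sum f (S \<inter> A) + sum f (S - A)" for f :: "'a \<Rightarrow> real"
    using S by (metis Diff_Diff_Int Diff_subset inf_commute sum.subset_diff)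
  have "2 * (measure_pmf.prob P A - measure_pmf.prob Q A) = (\<Sum>x\<in>S. e x * (pmf P x - pmf Q x))"
  proof -
    have "(\<Sum>x\<in>S. e x * (pmf P x - pmf Q x)) = (\<Sum>x\<in>S \<inter> A. e x * (pmf P x - pmf Q x)) + (\<Sum>x\<in>S - A. e x * (pmf P x - pmf Q x))"
      by (rule split)
    also have "\<dots> = (sum (pmf P) (S \<inter> A) - sum (pmf Q) (S \<inter> A)) - (sum (pmf P) (S - A) - sum (pmf Q) (S - A))"
      by (simp add: e_def sum_subtractf sum_negf)
    also have "\<dots> = 2 * (sum (pmf P) (S \<inter> A) - sum (pmf Q) (S \<inter> A))"
      using split[of "pmf P"] split[of "pmf Q"] s1 by simp
    finally show ?thesis using PA QA by simp
  qed
  also have "\<dots> = (\<Sum>x\<in>S. (e x * (sqrt (pmf P x) - sqrt (pmf Q x))) * (sqrt (pmf P x) + sqrt (pmf Q x)))"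
    by (intro sum.cong refl) (simp add: algebra_simps power2_eq_square flip: power2_eq_square)
  finally have eq: "2 * (measure_pmf.prob P A - measure_pmf.prob Q A) = \<dots>" .
  have "(\<Sum>x\<in>S. (e x * (sqrt (pmf P x) - sqrt (pmf Q x))) * (sqrt (pmf P x) + sqrt (pmf Q x)))\<^sup>2
        \<le> (\<Sum>x\<in>S. (e x * (sqrt (pmf P x) - sqrt (pmf Q x)))\<^sup>2) * (\<Sum>x\<in>S. (sqrt (pmf P x) + sqrt (pmf Q x))\<^sup>2)"
    by (rule Cauchy_Schwarz_ineq_sum)
  also have "(\<Sum>x\<in>S. (e x * (sqrt (pmf P x) - sqrt (pmf Q x)))\<^sup>2) = (\<Sum>x\<in>S. (sqrt (pmf P x) - sqrt (pmf Q x))\<^sup>2)"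
    by (intro sum.cong refl) (simp add: e_def power2_eq_square)
  also have "(\<Sum>x\<in>S. (sqrt (pmf P x) - sqrt (pmf Q x))\<^sup>2) = 2 - 2 * bc P Q"
    using s1 bc_eq[OF S, of P Q]
    by (simp add: S_def power2_eq_square algebra_simps sum.distrib sum_subtractf sum_distrib_left real_sqrt_mult)
  also have "(\<Sum>x\<in>S. (sqrt (pmf P x) + sqrt (pmf Q x))\<^sup>2) = 2 + 2 * bc P Q"
    using s1 bc_eq[OF S, of P Q]
    by (simp add: S_def power2_eq_square algebra_simps sum.distrib sum_distrib_left real_sqrt_mult)
  finally have "(2 * (measure_pmf.prob P A - measure_pmf.prob Q A))\<^sup>2 \<le> (2 - 2 * bc P Q) * (2 + 2 * bc P Q)"
    using eq by simp
  hence "(measure_pmf.prob P A - measure_pmf.prob Q A)\<^sup>2 \<le> 1 - (bc P Q)\<^sup>2"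
    by (simp add: power2_eq_square algebra_simps)
  hence "sqrt ((measure_pmf.prob P A - measure_pmf.prob Q A)\<^sup>2) \<le> sqrt (1 - (bc P Q)\<^sup>2)"
    by (rule real_sqrt_le_mono)
  thus ?thesis by simp
qed




definition splitf :: "nat \<Rightarrow> (nat \<Rightarrow> bool \<times> (nat list \<Rightarrow> bool)) \<Rightarrow> nat list \<Rightarrow> bool" where
  "splitf d h v = (case v of [] \<Rightarrow> False | i # w \<Rightarrow> if i < d then (if w = [] then fst (h i) else snd (h i) w) else False)"

lemma tree_vertices_alt: "tree_vertices d t = {xs. set xs \<subseteq> {..<d} \<and> length xs \<le> t}"
  by (auto simp: tree_vertices_def)

lemma finite_tree_vertices[simp]: "finite (tree_vertices d t)"
  unfolding tree_vertices_alt by (rule finite_lists_length_le) auto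

lemma V_Suc:
  "tree_vertices d (Suc t) - {[]} =
     (\<lambda>i. [i]) ` {..<d} \<union> (\<lambda>(i, w). i # w) ` ({..<d} \<times> (tree_vertices d t - {[]}))"
  (is "?L = ?R")
proof
  show "?L \<subseteq> ?R"
  proof
    fix v assume v: "v \<in> ?L"
    then obtain i w where vi: "v = i # w" by (cases v) auto
    show "v \<in> ?R"
    proof (cases "w = []")
      case True thus ?thesis using v vi by (auto simp: tree_vertices_def)
    next
      case False
      hence "(i, w) \<in> {..<d} \<times> (tree_vertices d t - {[]})" using v vi by (auto simp: tree_vertices_def)
      thus ?thesis unfolding vi by blast
    qed
  qed
  show "?R \<subseteq> ?L" by (auto simp: tree_vertices_def)
qed

lemma set_edge_flips:
  assumes "0 < \<theta>" "\<theta> < 1"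
  shows "set_pmf (edge_flips \<theta> d t) = {f. \<forall>v. v \<notin> tree_vertices d t - {[]} \<longrightarrow> f v = False}"
  using assms unfolding edge_flips_def
  by (subst set_Pi_pmf) (auto simp: PiE_dflt_def)

lemma pmf_edge_flips:
  "pmf (edge_flips \<theta> d t) f =
     (if \<forall>v. v \<notin> tree_vertices d t - {[]} \<longrightarrow> f v = False
      then \<Prod>v\<in>tree_vertices d t - {[]}. pmf (bernoulli_pmf ((1 - \<theta>) / 2)) (f v) else 0)"
  unfolding edge_flips_def by (rule pmf_Pi) simp

lemma edge_flips_Suc:
  assumes th: "0 < \<theta>" "\<theta> < 1"
  shows "edge_flips \<theta> d (Suc t) =
    map_pmf (splitf d) (Pi_pmf {..<d} (False, \<lambda>_. False)
       (\<lambda>_. pair_pmf (bernoulli_pmf ((1 - \<theta>) / 2)) (edge_flips \<theta> d t)))"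
    (is "?L = map_pmf _ ?P")
proof (rule pmf_eqI)
  fix f :: "nat list \<Rightarrow> bool"
  define V where "V = tree_vertices d t - {[]}"
  define V' where "V' = tree_vertices d (Suc t) - {[]}"
  define B where "B = bernoulli_pmf ((1 - \<theta>) / 2)"
  have sB: "set_pmf B = UNIV" using th by (simp add: B_def)
  have setP: "set_pmf ?P = PiE_dflt {..<d} (False, \<lambda>_. False) (\<lambda>_. UNIV \<times> {g. \<forall>v. v \<notin> V \<longrightarrow> g v = False})"
    by (subst set_Pi_pmf) (auto simp: set_edge_flips[OF th] V_def o_def sB[unfolded B_def])
  have split_out: "splitf d h v = False" if "h \<in> set_pmf ?P" "v \<notin> V'" for h v
  proof (cases v)
    case (Cons i w)
    show ?thesis
    proof (cases "i < d \<and> w \<noteq> []")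
      case True
      hence "w \<notin> V" using that(2) unfolding Cons V'_def V_Suc V_def[symmetric] by auto
      moreover have "snd (h i) \<in> {g. \<forall>v. v \<notin> V \<longrightarrow> g v = False}"
        using that(1) True unfolding setP PiE_dflt_def by (auto simp: mem_Times_iff)
      ultimately show ?thesis using True by (simp add: splitf_def Cons)
    next
      case False
      thus ?thesis using that(2) unfolding Cons V'_def V_Suc V_def[symmetric] by (auto simp: splitf_def)
    qed
  qed (simp add: splitf_def)
  show "pmf ?L f = pmf (map_pmf (splitf d) ?P) f"
  proof (cases "\<forall>v. v \<notin> V' \<longrightarrow> f v = False")
    case False
    hence "pmf ?L f = 0" by (auto simp: pmf_edge_flips V'_def)
    moreover have "pmf (map_pmf (splitf d) ?P) f = 0"
      using False split_out by (intro pmf_map_outside) auto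
    ultimately show ?thesis by simp
  next
    case True
    define h where "h = (\<lambda>i. if i < d then (f [i], \<lambda>w. if w \<in> V then f (i # w) else False) else (False, \<lambda>_. False))"
    have hP: "h \<in> set_pmf ?P" unfolding setP by (auto simp: h_def PiE_dflt_def)
    have sh: "splitf d h = f"
    proof
      fix v show "splitf d h v = f v"
      proof (cases v)
        case Nil thus ?thesis using True by (simp add: splitf_def V'_def)
      next
        case (Cons i w)
        show ?thesis
        proof (cases "i < d \<and> (w = [] \<or> w \<in> V)")
          case True thus ?thesis by (auto simp: splitf_def h_def Cons)
        next
          case False
          hence "v \<notin> V'" unfolding V'_def V_Suc V_def[symmetric] using Cons by auto
          thus ?thesis using False `\<forall>v. v \<notin> V' \<longrightarrow> f v = False` by (auto simp: splitf_def h_def Cons)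
        qed
      qed
    qed
    have inj: "inj_on (splitf d) (set_pmf ?P)"
    proof (rule inj_onI)
      fix h1 h2 assume h1: "h1 \<in> set_pmf ?P" and h2: "h2 \<in> set_pmf ?P" and eq: "splitf d h1 = splitf d h2"
      show "h1 = h2"
      proof
        fix i show "h1 i = h2 i"
        proof (cases "i < d")
          case False thus ?thesis using h1 h2 unfolding setP PiE_dflt_def by auto
        next
          case True
          have "fst (h1 i) = fst (h2 i)" using fun_cong[OF eq, of "[i]"] True by (simp add: splitf_def)
          moreover have "snd (h1 i) w = snd (h2 i) w" for w
          proof (cases "w = []")
            case True
            hence "w \<notin> V" by (simp add: V_def)
            thus ?thesis using h1 h2 `i < d` unfolding setP PiE_dflt_def by auto
          next
            case False
            thus ?thesis using fun_cong[OF eq, of "i # w"] `i < d` by (simp add: splitf_def)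
          qed
          ultimately show ?thesis by (simp add: prod_eq_iff fun_eq_iff)
        qed
      qed
    qed
    have "pmf (map_pmf (splitf d) ?P) f = pmf ?P h"
      using pmf_map_inj[OF inj hP] by (simp add: sh)
    also have "\<dots> = (\<Prod>i\<in>{..<d}. pmf B (f [i]) * (\<Prod>w\<in>V. pmf B (f (i # w))))"
      by (subst pmf_Pi) (auto simp: h_def pmf_pair pmf_edge_flips V_def[symmetric] B_def[symmetric] intro!: prod.cong)
    also have "\<dots> = (\<Prod>i\<in>{..<d}. pmf B (f [i])) * (\<Prod>(i, w)\<in>{..<d} \<times> V. pmf B (f (i # w)))"
      by (simp add: prod.distrib prod.cartesian_product)
    also have "(\<Prod>i\<in>{..<d}. pmf B (f [i])) = (\<Prod>v\<in>(\<lambda>i. [i]) ` {..<d}. pmf B (f v))"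
      by (subst prod.reindex) (auto simp: inj_on_def)
    also have "(\<Prod>(i, w)\<in>{..<d} \<times> V. pmf B (f (i # w))) = (\<Prod>v\<in>(\<lambda>(i, w). i # w) ` ({..<d} \<times> V). pmf B (f v))"
      by (subst prod.reindex) (auto simp: inj_on_def case_prod_unfold)
    also have "(\<Prod>v\<in>(\<lambda>i. [i]) ` {..<d}. pmf B (f v)) * \<dots> = (\<Prod>v\<in>V'. pmf B (f v))"
      unfolding V'_def V_Suc V_def[symmetric]
      by (rule prod.union_disjoint[symmetric]) (auto simp: V_def)
    also have "\<dots> = pmf ?L f"
      using True by (simp add: pmf_edge_flips V'_def B_def)
    finally show ?thesis ..
  qed
qed




definition assemble :: "nat \<Rightarrow> (nat \<Rightarrow> bool option \<times> (nat list \<Rightarrow> bool option)) \<Rightarrow> nat list \<Rightarrow> bool option" where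
  "assemble d g v = (case v of [] \<Rightarrow> None | i # w \<Rightarrow> if i < d then (if w = [] then fst (g i) else snd (g i) w) else None)"

definition kid :: "real \<Rightarrow> nat \<Rightarrow> nat \<Rightarrow> nat \<Rightarrow> bool \<Rightarrow> nat \<Rightarrow> (bool option \<times> (nat list \<Rightarrow> bool option)) pmf" where
  "kid \<theta> d m t s i = bind_pmf (bernoulli_pmf ((1 - \<theta>) / 2))
     (\<lambda>b. map_pmf (\<lambda>y. (if i < m then Some (s \<noteq> b) else None, y)) (revealed_dist \<theta> d m t (s \<noteq> b)))"

definition obs :: "nat \<Rightarrow> nat \<Rightarrow> nat \<Rightarrow> bool \<Rightarrow> (nat list \<Rightarrow> bool) \<Rightarrow> nat list \<Rightarrow> bool option" where
  "obs d m t s f v = (if v \<in> revealed_vertices d m t then Some (vertex_label s f v) else None)"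

lemma Pi_pmf_map_dep:
  assumes "finite A"
  shows "Pi_pmf A dflt (\<lambda>i. map_pmf (\<phi> i) (p i)) =
         map_pmf (\<lambda>h i. if i \<in> A then \<phi> i (h i) else dflt) (Pi_pmf A dflt' p)"
proof -
  have "Pi_pmf A dflt (\<lambda>i. map_pmf (\<phi> i) (p i)) = Pi_pmf A dflt (\<lambda>i. bind_pmf (p i) (\<lambda>x. return_pmf (\<phi> i x)))"
    by (simp add: map_pmf_def)
  also have "\<dots> = bind_pmf (Pi_pmf A dflt' p) (\<lambda>h. Pi_pmf A dflt (\<lambda>i. return_pmf (\<phi> i (h i))))"
    by (rule Pi_pmf_bind[OF assms])
  also have "\<dots> = map_pmf (\<lambda>h i. if i \<in> A then \<phi> i (h i) else dflt) (Pi_pmf A dflt' p)"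
    using assms by (simp add: map_pmf_def)
  finally show ?thesis .
qed

lemma vertex_label_cong:
  assumes "\<And>k. k \<in> {1..length w} \<Longrightarrow> f (take k w) = g (take k w)"
  shows "vertex_label s f w = vertex_label s g w"
proof -
  have "{k \<in> {1..length w}. f (take k w)} = {k \<in> {1..length w}. g (take k w)}"
    using assms by auto
  thus ?thesis by (simp add: vertex_label_def)
qed

lemma vertex_label_Cons:
  "vertex_label s f (i # w) = vertex_label (s \<noteq> f [i]) (\<lambda>u. f (i # u)) w"
proof -
  let ?P = "\<lambda>k. f (take k (i # w))"
  have eq: "{k \<in> {1..Suc (length w)}. ?P k} =
        (if f [i] then {1} else {}) \<union> Suc ` {k \<in> {1..length w}. f (i # take k w)}"
  proof (intro equalityI subsetI)
    fix k assume k: "k \<in> {k \<in> {1..Suc (length w)}. ?P k}"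
    show "k \<in> (if f [i] then {1} else {}) \<union> Suc ` {k \<in> {1..length w}. f (i # take k w)}"
    proof (cases "k = 1")
      case True thus ?thesis using k by auto
    next
      case False
      then obtain k' where "k = Suc k'" "k' \<ge> 1" using k by (cases k) auto
      thus ?thesis using k by auto
    qed
  qed (auto split: if_splits)
  have card: "card {k \<in> {1..Suc (length w)}. ?P k} =
        (if f [i] then 1 else 0) + card {k \<in> {1..length w}. f (i # take k w)}"
    unfolding eq by (subst card_Un_disjoint) (auto simp: card_image)
  have "vertex_label s f (i # w) = (s \<noteq> odd (card {k \<in> {1..Suc (length w)}. ?P k}))"
    by (simp only: vertex_label_def length_Cons)
  also have "\<dots> = (s \<noteq> odd ((if f [i] then 1 else 0) + card {k \<in> {1..length w}. f (i # take k w)}))"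
    by (simp only: card)
  also have "\<dots> = vertex_label (s \<noteq> f [i]) (\<lambda>u. f (i # u)) w"
    by (auto simp: vertex_label_def)
  finally show ?thesis .
qed

lemma vertex_label_single: "vertex_label s f [i] = (s \<noteq> f [i])"
  by (simp add: vertex_label_Cons) (simp add: vertex_label_def)

lemma revealed_Suc_Cons:
  "i # w \<in> revealed_vertices d m (Suc t) \<longleftrightarrow> i < d \<and> (if w = [] then i < m else w \<in> revealed_vertices d m t)"
  by (auto simp: revealed_vertices_def tree_vertices_def)

lemma revealed_dist_Suc:
  assumes th: "0 < \<theta>" "\<theta> < 1"
  shows "revealed_dist \<theta> d m (Suc t) s =
         map_pmf (assemble d) (Pi_pmf {..<d} (None, \<lambda>_. None) (kid \<theta> d m t s))"
proof -
  define B where "B = bernoulli_pmf ((1 - \<theta>) / 2)"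
  define \<phi> where "\<phi> i = (\<lambda>(b, g). (if i < m then Some (s \<noteq> b) else None, obs d m t (s \<noteq> b) g))" for i
  have kid_eq: "kid \<theta> d m t s i = map_pmf (\<phi> i) (pair_pmf B (edge_flips \<theta> d t))" for i
    by (simp add: kid_def \<phi>_def B_def revealed_dist_def obs_def[abs_def] pair_pmf_def map_bind_pmf
                  bind_map_pmf map_pmf_def bind_assoc_pmf bind_return_pmf)
  have "Pi_pmf {..<d} (None, \<lambda>_. None) (kid \<theta> d m t s) =
        map_pmf (\<lambda>h i. if i \<in> {..<d} then \<phi> i (h i) else (None, \<lambda>_. None))
          (Pi_pmf {..<d} (False, \<lambda>_. False) (\<lambda>_. pair_pmf B (edge_flips \<theta> d t)))"
    unfolding kid_eq by (rule Pi_pmf_map_dep) simp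
  moreover have "revealed_dist \<theta> d m (Suc t) s =
        map_pmf (obs d m (Suc t) s \<circ> splitf d)
          (Pi_pmf {..<d} (False, \<lambda>_. False) (\<lambda>_. pair_pmf B (edge_flips \<theta> d t)))"
    unfolding revealed_dist_def edge_flips_Suc[OF th] B_def pmf.map_comp
    by (simp add: obs_def[abs_def] o_def)
  moreover have "obs d m (Suc t) s \<circ> splitf d =
        assemble d \<circ> (\<lambda>h i. if i \<in> {..<d} then \<phi> i (h i) else (None, \<lambda>_. None))"
  proof (intro ext, simp only: o_def)
    fix h v
    show "obs d m (Suc t) s (splitf d h) v =
          assemble d (\<lambda>i. if i \<in> {..<d} then \<phi> i (h i) else (None, \<lambda>_. None)) v"
    proof (cases v)
      case Nil thus ?thesis by (simp add: obs_def assemble_def revealed_vertices_def)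
    next
      case (Cons i w)
      show ?thesis
      proof (cases "i < d")
        case False thus ?thesis by (simp add: obs_def assemble_def revealed_Suc_Cons Cons)
      next
        case True
        show ?thesis
        proof (cases "w = []")
          case True
          thus ?thesis using `i < d`
            by (simp add: obs_def assemble_def revealed_Suc_Cons Cons \<phi>_def case_prod_unfold
                          vertex_label_single splitf_def)
        next
          case False
          have h1: "splitf d h [i] = fst (h i)" using `i < d` by (simp add: splitf_def)
          have "vertex_label s (splitf d h) (i # w) = vertex_label (s \<noteq> fst (h i)) (\<lambda>u. splitf d h (i # u)) w"
            by (simp add: vertex_label_Cons h1)
          also have "\<dots> = vertex_label (s \<noteq> fst (h i)) (snd (h i)) w"
          proof (rule vertex_label_cong)
            fix k assume "k \<in> {1..length w}"
            hence "take k w \<noteq> []" using False by auto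
            thus "splitf d h (i # take k w) = snd (h i) (take k w)" using `i < d`
              by (simp add: splitf_def)
          qed
          finally have "vertex_label s (splitf d h) (i # w) = vertex_label (s \<noteq> fst (h i)) (snd (h i)) w" .
          thus ?thesis using `i < d` False
            by (simp add: obs_def assemble_def revealed_Suc_Cons Cons \<phi>_def case_prod_unfold)
        qed
      qed
    qed
  qed
  ultimately show ?thesis by (simp add: pmf.map_comp)
qed




lemma finite_set_edge_flips: "finite (set_pmf (edge_flips \<theta> d t))"
  unfolding edge_flips_def by (subst set_Pi_pmf) (auto intro!: finite_PiE_dflt)

lemma finite_set_revealed: "finite (set_pmf (revealed_dist \<theta> d m t s))"
  unfolding revealed_dist_def by (simp add: finite_set_edge_flips)

lemma finite_set_kid: "finite (set_pmf (kid \<theta> d m t s i))"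
  unfolding kid_def by (auto simp: finite_set_revealed)

lemma bc_return: "bc (return_pmf x) (return_pmf x) = 1"
  by (simp add: bc_def)

lemma bc_zero: "bc (revealed_dist \<theta> d m 0 True) (revealed_dist \<theta> d m 0 False) = 1"
proof -
  have "revealed_vertices d m 0 = {}" by (auto simp: revealed_vertices_def tree_vertices_def)
  hence "revealed_dist \<theta> d m 0 s = return_pmf (\<lambda>_. None)" for s
    by (simp add: revealed_dist_def)
  thus ?thesis by (simp add: bc_return)
qed

lemma bc_kid:
  assumes th: "0 < \<theta>" "\<theta> < 1"
  shows "bc (kid \<theta> d m t True i) (kid \<theta> d m t False i) \<ge>
          (if i < m then 1 - \<theta>\<^sup>2
           else 1 - \<theta>\<^sup>2 * (1 - bc (revealed_dist \<theta> d m t True) (revealed_dist \<theta> d m t False)))"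
proof -
  define q where "q = (1 - \<theta>) / 2"
  define M where "M c = map_pmf (\<lambda>y. (if i < m then Some c else None, y)) (revealed_dist \<theta> d m t c)" for c
  have q: "0 \<le> q" "q \<le> 1" using th by (auto simp: q_def)
  have k1: "pmf (kid \<theta> d m t True i) x = (1 - q) * pmf (M True) x + q * pmf (M False) x" for x
    using q by (simp add: kid_def pmf_bind q_def[symmetric] M_def)
  have k0: "pmf (kid \<theta> d m t False i) x = q * pmf (M True) x + (1 - q) * pmf (M False) x" for x
    using q by (simp add: kid_def pmf_bind q_def[symmetric] M_def)
  have fin: "finite (set_pmf (M c))" for c by (simp add: M_def finite_set_revealed)
  have "1 - bc (kid \<theta> d m t True i) (kid \<theta> d m t False i) \<le> ((1 - q) - q)\<^sup>2 * (1 - bc (M True) (M False))"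
    by (rule bc_mix[OF fin fin _ _ _ k1 k0]) (use q in auto)
  also have "(1 - q) - q = \<theta>" by (simp add: q_def field_simps)
  finally have main: "1 - bc (kid \<theta> d m t True i) (kid \<theta> d m t False i) \<le> \<theta>\<^sup>2 * (1 - bc (M True) (M False))" .
  show ?thesis
  proof (cases "i < m")
    case True
    have "\<theta>\<^sup>2 * (1 - bc (M True) (M False)) \<le> \<theta>\<^sup>2 * 1"
      using bc_nonneg[of "M True" "M False"] by (intro mult_left_mono) auto
    thus ?thesis using main True by simp
  next
    case False
    have "bc (revealed_dist \<theta> d m t True) (revealed_dist \<theta> d m t False) \<le> bc (M True) (M False)"
      unfolding M_def using False by (simp add: bc_map finite_set_revealed)
    hence "\<theta>\<^sup>2 * (1 - bc (M True) (M False)) \<le> \<theta>\<^sup>2 * (1 - bc (revealed_dist \<theta> d m t True) (revealed_dist \<theta> d m t False))"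
      by (intro mult_left_mono) auto
    thus ?thesis using main False by simp
  qed
qed

lemma bc_step:
  assumes th: "0 < \<theta>" "\<theta> < 1" and md: "m \<le> d"
  defines "\<beta> \<equiv> \<lambda>t. bc (revealed_dist \<theta> d m t True) (revealed_dist \<theta> d m t False)"
  shows "\<beta> (Suc t) \<ge> (1 - \<theta>\<^sup>2) ^ m * (1 - \<theta>\<^sup>2 * (1 - \<beta> t)) ^ (d - m)"
proof -
  have t2: "\<theta>\<^sup>2 < 1" using th by (simp add: power_less_one_iff)
  have b0: "\<beta> t \<ge> 0" by (simp add: \<beta>_def bc_nonneg)
  have "(1 - \<theta>\<^sup>2) ^ m * (1 - \<theta>\<^sup>2 * (1 - \<beta> t)) ^ (d - m) =
        (\<Prod>i\<in>{..<d}. if i < m then 1 - \<theta>\<^sup>2 else 1 - \<theta>\<^sup>2 * (1 - \<beta> t))"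
  proof -
    have "{..<d} \<inter> {i. i < m} = {..<m}" "{..<d} \<inter> - {i. i < m} = {m..<d}" using md by auto
    thus ?thesis by (simp add: prod.If_cases)
  qed
  also have "\<dots> \<le> (\<Prod>i\<in>{..<d}. bc (kid \<theta> d m t True i) (kid \<theta> d m t False i))"
  proof (rule prod_mono, safe)
    fix i
    have "1 - \<theta>\<^sup>2 * (1 - \<beta> t) \<ge> 1 - \<theta>\<^sup>2"
      using b0 by (simp add: algebra_simps)
    thus "0 \<le> (if i < m then 1 - \<theta>\<^sup>2 else 1 - \<theta>\<^sup>2 * (1 - \<beta> t))" using t2 by auto
    show "(if i < m then 1 - \<theta>\<^sup>2 else 1 - \<theta>\<^sup>2 * (1 - \<beta> t)) \<le> bc (kid \<theta> d m t True i) (kid \<theta> d m t False i)"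
      using bc_kid[OF th, where d=d and m=m and t=t and i=i] by (simp add: \<beta>_def split: if_splits)
  qed
  also have "\<dots> = bc (Pi_pmf {..<d} (None, \<lambda>_. None) (kid \<theta> d m t True)) (Pi_pmf {..<d} (None, \<lambda>_. None) (kid \<theta> d m t False))"
    by (rule bc_Pi[symmetric]) (auto simp: finite_set_kid)
  also have "\<dots> \<le> \<beta> (Suc t)"
    unfolding \<beta>_def revealed_dist_Suc[OF th]
    by (rule bc_map) (simp add: set_Pi_pmf finite_set_kid finite_PiE_dflt)
  finally show ?thesis .
qed




lemma numeric_step:
  fixes \<theta> G x L :: real and m k :: nat
  assumes th: "0 < \<theta>" "\<theta> < 1" and m2: "m \<ge> 2"
    and x: "x = real k * \<theta>\<^sup>2" "0 \<le> x" "x < 1"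
    and L: "L = ln (1 + 4 * \<theta>\<^sup>2 / (1 - \<theta>\<^sup>2))"
    and G: "G * (1 - x) = real m * L" "0 \<le> G" "G < 1/2"
  shows "exp (- G) \<le> (1 - \<theta>\<^sup>2) ^ m * (1 - \<theta>\<^sup>2 * G) ^ k"
proof -
  define y where "y = \<theta>\<^sup>2"
  have y: "0 < y" "y < 1" using th by (auto simp: y_def power_less_one_iff)
  have yG: "y * G \<le> 1/2" proof -
    have "y * G \<le> 1 * G" using y G by (intro mult_right_mono) auto
    thus ?thesis using G by simp
  qed
  have yG0: "0 \<le> y * G" using y G by simp
  have Lsplit: "ln (1 - y) = ln (1 + 3 * y) - L"
  proof -
    have "1 + 4 * y / (1 - y) = (1 + 3 * y) / (1 - y)" using y by (simp add: field_simps)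
    moreover have "ln ((1 + 3 * y) / (1 - y)) = ln (1 + 3 * y) - ln (1 - y)"
      using y by (intro ln_divide_pos) auto
    ultimately show ?thesis by (simp add: L y_def)
  qed
  have ln3: "ln (1 + 3 * y) \<ge> 3 * y / 4"
  proof -
    have "ln (1 / (1 + 3 * y)) \<le> 1 / (1 + 3 * y) - 1" using y by (intro ln_le_minus_one) auto
    hence "ln (1 + 3 * y) \<ge> 3 * y / (1 + 3 * y)" using y by (simp add: ln_div field_simps)
    moreover have "3 * y / (1 + 3 * y) \<ge> 3 * y / 4" using y by (intro divide_left_mono) auto
    ultimately show ?thesis by linarith
  qed
  have lnG: "ln (1 - y * G) \<ge> - (y * G) - 2 * (y * G)\<^sup>2"
    by (rule ln_one_minus_pos_lower_bound[OF yG0 yG])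
  have pos1: "0 < 1 - y" "0 < 1 - y * G" using y yG by auto
  have "ln ((1 - y) ^ m * (1 - y * G) ^ k) = real m * ln (1 - y) + real k * ln (1 - y * G)"
    using pos1 by (simp add: ln_mult ln_realpow)
  also have "\<dots> \<ge> real m * (ln (1 + 3 * y) - L) + real k * (- (y * G) - 2 * (y * G)\<^sup>2)"
    unfolding Lsplit by (intro add_left_mono mult_left_mono lnG) auto
  finally have A: "ln ((1 - y) ^ m * (1 - y * G) ^ k) \<ge>
                   real m * ln (1 + 3 * y) - real m * L - x * G - 2 * x * y * G\<^sup>2"
    by (simp add: x y_def algebra_simps power2_eq_square)
  have B: "real m * L = G - x * G" using G by (simp add: algebra_simps)
  have C: "2 * x * y * G\<^sup>2 \<le> y / 2"
  proof -
    have "G\<^sup>2 \<le> (1/2)\<^sup>2" using G by (intro power_mono) auto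
    hence "x * G\<^sup>2 \<le> 1 * (1/4)" using x by (intro mult_mono) (auto simp: power2_eq_square)
    hence "y * (x * G\<^sup>2) \<le> y * (1/4)" using y by (intro mult_left_mono) auto
    thus ?thesis by (simp add: algebra_simps)
  qed
  have D: "real m * ln (1 + 3 * y) \<ge> 2 * (3 * y / 4)"
  proof -
    have "real m * ln (1 + 3 * y) \<ge> 2 * ln (1 + 3 * y)"
      using m2 y by (intro mult_right_mono) auto
    thus ?thesis using ln3 by linarith
  qed
  have "- G \<le> ln ((1 - y) ^ m * (1 - y * G) ^ k)" using A B C D y by linarith
  hence "exp (- G) \<le> exp (ln ((1 - y) ^ m * (1 - y * G) ^ k))" by simp
  also have "\<dots> = (1 - y) ^ m * (1 - y * G) ^ k" using pos1 by simp
  finally show ?thesis by (simp add: y_def)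
qed




lemma main_bounds:
  fixes \<theta> \<delta> :: real and d m t :: nat
  assumes th: "0 < \<theta>" "\<theta> < 1" and dl: "0 \<le> \<delta>" "\<delta> \<le> 1" and dm: "\<delta> * real d = real m"
    and h1: "\<delta> * real d > 1" and h2: "(1 - \<delta>) * \<theta>\<^sup>2 * real d < 1"
    and h3: "2 * \<delta> * real d * ln (1 + 4 * \<theta>\<^sup>2 / (1 - \<theta>\<^sup>2)) < (1 - (1 - \<delta>) * \<theta>\<^sup>2 * real d)\<^sup>2"
  shows "(tv_dist (revealed_dist \<theta> d m t True) (revealed_dist \<theta> d m t False))\<^sup>2
           \<le> 2 * \<delta> * real d * ln (1 + 4 * \<theta>\<^sup>2 / (1 - \<theta>\<^sup>2)) / (1 - (1 - \<delta>) * \<theta>\<^sup>2 * real d)"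
    and "(INF \<Phi>::(nat list \<Rightarrow> bool option) \<Rightarrow> bool.
          SUP s::bool. measure_pmf.prob (revealed_dist \<theta> d m t s) {x. \<Phi> x \<noteq> s})
         \<ge> 1/2 - 1 * sqrt (\<delta> * real d * ln (1 + 4 * \<theta>\<^sup>2 / (1 - \<theta>\<^sup>2))
                             / (1 - (1 - \<delta>) * \<theta>\<^sup>2 * real d))"
proof -
  define L where "L = ln (1 + 4 * \<theta>\<^sup>2 / (1 - \<theta>\<^sup>2))"
  define x where "x = (1 - \<delta>) * \<theta>\<^sup>2 * real d"
  define G where "G = \<delta> * real d * L / (1 - x)"
  have t2: "\<theta>\<^sup>2 < 1" "0 < \<theta>\<^sup>2" using th by (auto simp: power_less_one_iff)
  have md: "m \<le> d"
  proof -
    have "\<delta> * real d \<le> 1 * real d" using dl by (intro mult_right_mono) auto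
    thus ?thesis using dm by simp
  qed
  have m2: "m \<ge> 2" using h1 dm by simp
  have x_eq: "x = real (d - m) * \<theta>\<^sup>2"
    using md dm by (simp add: x_def of_nat_diff algebra_simps)
  have x0: "0 \<le> x" using dl t2 by (simp add: x_def)
  have x1: "x < 1" using h2 by (simp add: x_def)
  have L0: "0 \<le> L" unfolding L_def using t2 by (intro ln_ge_zero) auto
  have GmL: "G * (1 - x) = real m * L" using x1 dm by (simp add: G_def)
  have G0: "0 \<le> G" using x1 L0 dl by (simp add: G_def)
  have G1: "G < 1/2"
  proof -
    have h3': "2 * \<delta> * real d * L < (1 - x)\<^sup>2" using h3 by (simp add: L_def x_def)
    have "2 * \<delta> * real d * L = 2 * (G * (1 - x))" using GmL dm by (simp add: mult.assoc)
    hence "2 * (G * (1 - x)) < (1 - x) * (1 - x)" using h3' by (simp add: power2_eq_square)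
    hence "(2 * G) * (1 - x) < (1 - x) * (1 - x)" by (simp add: mult.assoc)
    hence "2 * G < 1 - x" using x1 by (simp add: mult_less_cancel_right)
    thus ?thesis using x0 by simp
  qed
  define \<beta> where "\<beta> t = bc (revealed_dist \<theta> d m t True) (revealed_dist \<theta> d m t False)" for t
  have inv: "\<beta> t \<ge> exp (- G)" for t
  proof (induction t)
    case 0
    have "exp (- G) \<le> exp 0" using G0 by simp
    thus ?case by (simp add: \<beta>_def bc_zero)
  next
    case (Suc t)
    have e: "1 - \<beta> t \<le> G"
    proof -
      have "1 + (- G) \<le> exp (- G)" by (rule exp_ge_add_one_self)
      thus ?thesis using Suc by linarith
    qed
    have pos: "0 \<le> 1 - \<theta>\<^sup>2 * G"
    proof -
      have "\<theta>\<^sup>2 * G \<le> 1 * (1/2)" using t2 G0 G1 by (intro mult_mono) auto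
      thus ?thesis by simp
    qed
    have "1 - \<theta>\<^sup>2 * G \<le> 1 - \<theta>\<^sup>2 * (1 - \<beta> t)"
      using e t2 by (simp add: mult_left_mono)
    hence "(1 - \<theta>\<^sup>2 * G) ^ (d - m) \<le> (1 - \<theta>\<^sup>2 * (1 - \<beta> t)) ^ (d - m)"
      using pos by (intro power_mono) auto
    hence "(1 - \<theta>\<^sup>2) ^ m * (1 - \<theta>\<^sup>2 * G) ^ (d - m) \<le> (1 - \<theta>\<^sup>2) ^ m * (1 - \<theta>\<^sup>2 * (1 - \<beta> t)) ^ (d - m)"
      using t2 by (intro mult_left_mono) auto
    also have "\<dots> \<le> \<beta> (Suc t)"
      unfolding \<beta>_def by (rule bc_step[OF th md])
    finally have "(1 - \<theta>\<^sup>2) ^ m * (1 - \<theta>\<^sup>2 * G) ^ (d - m) \<le> \<beta> (Suc t)" .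
    moreover have "exp (- G) \<le> (1 - \<theta>\<^sup>2) ^ m * (1 - \<theta>\<^sup>2 * G) ^ (d - m)"
      by (rule numeric_step[OF th m2 x_eq x0 x1 L_def GmL G0 G1])
    ultimately show ?case by linarith
  qed
  define P where "P = revealed_dist \<theta> d m t True"
  define Q where "Q = revealed_dist \<theta> d m t False"
  have bPQ: "bc P Q \<ge> exp (- G)" using inv[of t] by (simp add: \<beta>_def P_def Q_def)
  have sq: "1 - (bc P Q)\<^sup>2 \<le> 2 * G"
  proof -
    have "(exp (- G))\<^sup>2 \<le> (bc P Q)\<^sup>2" using bPQ by (intro power_mono) auto
    moreover have "(exp (- G))\<^sup>2 = exp (- (2 * G))" by (simp add: power2_eq_square flip: exp_add)
    moreover have "1 + (- (2 * G)) \<le> exp (- (2 * G))" by (rule exp_ge_add_one_self)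
    ultimately show ?thesis by linarith
  qed
  have bound: "\<bar>measure_pmf.prob P A - measure_pmf.prob Q A\<bar> \<le> sqrt (2 * G)" for A
  proof -
    have "\<bar>measure_pmf.prob P A - measure_pmf.prob Q A\<bar> \<le> sqrt (1 - (bc P Q)\<^sup>2)"
      unfolding P_def Q_def by (rule tv_bc) (simp_all add: finite_set_revealed)
    also have "\<dots> \<le> sqrt (2 * G)" using sq by simp
    finally show ?thesis .
  qed
  have tv_le: "tv_dist P Q \<le> sqrt (2 * G)"
    unfolding tv_dist_def by (rule cSUP_least) (auto simp: bound)
  have tv_ge: "0 \<le> tv_dist P Q"
    unfolding tv_dist_def by (rule cSUP_upper2[of _ _ "{}"]) (auto intro!: bdd_aboveI2 bound)
  have "(tv_dist P Q)\<^sup>2 \<le> (sqrt (2 * G))\<^sup>2" using tv_le tv_ge by (intro power_mono) auto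
  also have "\<dots> = 2 * G" using G0 by simp
  finally show "(tv_dist (revealed_dist \<theta> d m t True) (revealed_dist \<theta> d m t False))\<^sup>2
           \<le> 2 * \<delta> * real d * ln (1 + 4 * \<theta>\<^sup>2 / (1 - \<theta>\<^sup>2)) / (1 - (1 - \<delta>) * \<theta>\<^sup>2 * real d)"
    by (simp add: P_def Q_def G_def L_def x_def)
  have "1/2 - sqrt G \<le> (SUP s::bool. measure_pmf.prob (revealed_dist \<theta> d m t s) {x. \<Phi> x \<noteq> s})"
    for \<Phi> :: "(nat list \<Rightarrow> bool option) \<Rightarrow> bool"
  proof -
    let ?pr = "\<lambda>s. measure_pmf.prob (revealed_dist \<theta> d m t s) {x. \<Phi> x \<noteq> s}"
    have bdd: "bdd_above (range ?pr)" by (rule bdd_above_finite) simp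
    have uT: "?pr True \<le> (SUP s. ?pr s)" by (rule cSUP_upper[OF _ bdd]) simp
    have uF: "?pr False \<le> (SUP s. ?pr s)" by (rule cSUP_upper[OF _ bdd]) simp
    have pT: "?pr True = 1 - measure_pmf.prob P {x. \<Phi> x}"
    proof -
      have "{x. \<Phi> x \<noteq> True} = space (measure_pmf P) - {x. \<Phi> x}" by auto
      moreover have "measure_pmf.prob P (space (measure_pmf P) - {x. \<Phi> x}) = 1 - measure_pmf.prob P {x. \<Phi> x}"
        by (rule measure_pmf.prob_compl) simp
      ultimately show ?thesis by (simp add: P_def)
    qed
    have pF: "?pr False = measure_pmf.prob Q {x. \<Phi> x}" by (simp add: Q_def)
    have "measure_pmf.prob P {x. \<Phi> x} - measure_pmf.prob Q {x. \<Phi> x} \<le> sqrt (2 * G)"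
      using bound[of "{x. \<Phi> x}"] by linarith
    moreover have "sqrt (2 * G) \<le> 2 * sqrt G"
    proof -
      have "sqrt (2 * G) = sqrt 2 * sqrt G" by (simp add: real_sqrt_mult)
      moreover have "sqrt 2 \<le> (2::real)" by (rule power2_le_imp_le) auto
      moreover have "sqrt 2 * sqrt G \<le> 2 * sqrt G" using \<open>sqrt 2 \<le> 2\<close> G0 by (intro mult_right_mono) auto
      ultimately show ?thesis by simp
    qed
    ultimately show ?thesis using uT uF pT pF by linarith
  qed
  hence "1/2 - sqrt G \<le> (INF \<Phi>::(nat list \<Rightarrow> bool option) \<Rightarrow> bool.
          SUP s::bool. measure_pmf.prob (revealed_dist \<theta> d m t s) {x. \<Phi> x \<noteq> s})"
    by (intro cINF_greatest) auto
  thus "(INF \<Phi>::(nat list \<Rightarrow> bool option) \<Rightarrow> bool.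
          SUP s::bool. measure_pmf.prob (revealed_dist \<theta> d m t s) {x. \<Phi> x \<noteq> s})
         \<ge> 1/2 - 1 * sqrt (\<delta> * real d * ln (1 + 4 * \<theta>\<^sup>2 / (1 - \<theta>\<^sup>2))
                             / (1 - (1 - \<delta>) * \<theta>\<^sup>2 * real d))"
    by (simp add: G_def L_def x_def)
qed



theorem theorem3:
  "\<exists>C>0. \<forall>(\<theta>::real) (\<delta>::real) (d::nat) (m::nat) (t::nat).
     0 < \<theta> \<and> \<theta> < 1 \<and> 0 \<le> \<delta> \<and> \<delta> \<le> 1 \<and> \<delta> * real d = real m \<and>
     \<delta> * real d > 1 \<and> (1 - \<delta>) * \<theta>\<^sup>2 * real d < 1 \<and>
     2 * \<delta> * real d * ln (1 + 4 * \<theta>\<^sup>2 / (1 - \<theta>\<^sup>2)) < (1 - (1 - \<delta>) * \<theta>\<^sup>2 * real d)\<^sup>2 \<and>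
     t > 0 \<longrightarrow>
       (tv_dist (revealed_dist \<theta> d m t True) (revealed_dist \<theta> d m t False))\<^sup>2
         \<le> 2 * \<delta> * real d * ln (1 + 4 * \<theta>\<^sup>2 / (1 - \<theta>\<^sup>2)) / (1 - (1 - \<delta>) * \<theta>\<^sup>2 * real d)
     \<and> (INF \<Phi>::(nat list \<Rightarrow> bool option) \<Rightarrow> bool.
          SUP s::bool. measure_pmf.prob (revealed_dist \<theta> d m t s) {x. \<Phi> x \<noteq> s})
         \<ge> 1/2 - C * sqrt (\<delta> * real d * ln (1 + 4 * \<theta>\<^sup>2 / (1 - \<theta>\<^sup>2))
                             / (1 - (1 - \<delta>) * \<theta>\<^sup>2 * real d))"
proof (rule exI[of _ 1], intro conjI allI impI)
  show "(0::real) < 1" by simp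
next
  fix \<theta> \<delta> :: real and d m t :: nat
  assume H: "0 < \<theta> \<and> \<theta> < 1 \<and> 0 \<le> \<delta> \<and> \<delta> \<le> 1 \<and> \<delta> * real d = real m \<and>
     \<delta> * real d > 1 \<and> (1 - \<delta>) * \<theta>\<^sup>2 * real d < 1 \<and>
     2 * \<delta> * real d * ln (1 + 4 * \<theta>\<^sup>2 / (1 - \<theta>\<^sup>2)) < (1 - (1 - \<delta>) * \<theta>\<^sup>2 * real d)\<^sup>2 \<and>
     t > 0"
  then show "(tv_dist (revealed_dist \<theta> d m t True) (revealed_dist \<theta> d m t False))\<^sup>2
         \<le> 2 * \<delta> * real d * ln (1 + 4 * \<theta>\<^sup>2 / (1 - \<theta>\<^sup>2)) / (1 - (1 - \<delta>) * \<theta>\<^sup>2 * real d)"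
    using main_bounds(1) by blast
  from H show "(INF \<Phi>::(nat list \<Rightarrow> bool option) \<Rightarrow> bool.
          SUP s::bool. measure_pmf.prob (revealed_dist \<theta> d m t s) {x. \<Phi> x \<noteq> s})
         \<ge> 1/2 - 1 * sqrt (\<delta> * real d * ln (1 + 4 * \<theta>\<^sup>2 / (1 - \<theta>\<^sup>2))
                             / (1 - (1 - \<delta>) * \<theta>\<^sup>2 * real d))"
    using main_bounds(2) by blast
qed

end
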